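(* Let $n\in\mathbb{N}$ and let $f$ be a complex function. If $f$ is entire (respectively meromorphic) on $\mathbb{C}$, then $\mathcal{D}_q^n f$, $\mathcal{A}_{q^n}f$ and the product $(\eta_{q^n}f)(\eta_{q^{-n}}f)$ are all entire (respectively meromorphic) on $\mathbb{C}$.
   Context: Fix $q\in\mathbb{C}$ with $0<|q|<1$. Every $x\in\mathbb{C}$ is written uniquely as $x=\frac{z+z^{-1}}{2}$ with $|z|\ge 1$, where, when $|z|=1$, one takes $z=x+i\sqrt{1-x^2}$ (so that $x\in[-1,1]$); thus $|z|\to\infty$ iff $|x|\to\infty$. For a complex function $f$ define $(\eta_q f)(x)=f\big(\tfrac{q^{1/2}z+q^{-1/2}z^{-1}}{2}\big)$, $(\eta_q^{-1}f)(x)=f\big(\tfrac{q^{-1/2}z+q^{1/2}z^{-1}}{2}\big)$, $\eta_q^0f=f$, $\eta_q^{n}f=\eta_q(\eta_q^{n-1}f)$, $\eta_q^{-n}f=\eta_q^{-1}(\eta_q^{-(n-1)}f)$ for $n\in\mathbb{N}$, and $(\eta_{q^{n}}f)(x)=f\big(\tfrac{q^{n/2}z+q^{-n/2}z^{-1}}{2}\big)$, $(\eta_{q^{-n}}f)(x)=f\big(\tfrac{q^{-n/2}z+q^{n/2}z^{-1}}{2}\big)$. Write $\eta_q^{k}x$ for $\eta_q^k$ applied to the identity map. The Askey-Wilson operator is $(\mathcal{D}_qf)(x)=\frac{(\eta_qf)(x)-(\eta_q^{-1}f)(x)}{\eta_qx-\eta_q^{-1}x}$ for $x\neq\pm1$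 and $(\mathcal{D}_qf)(\pm1)=\lim_{x\to\pm1}(\mathcal{D}_qf)(x)$; $\mathcal{D}_q^0f=f$, $\mathcal{D}_q^nf=\mathcal{D}_q(\mathcal{D}_q^{n-1}f)$. The averaging operator is $(\mathcal{A}_{q^n}f)(x)=\frac{(\eta_{q^n}f)(x)+(\eta_{q^{-n}}f)(x)}{2}$ for $n\in\mathbb{N}$, and $\mathcal{A}_{q^0}f=f$. *)

theory Defs
  imports "HOL-Complex_Analysis.Complex_Analysis"
begin

text \<open>The parametrisation x = (z + 1/z)/2 with |z| >= 1; on [-1,1] one takes
  z = x + i sqrt(1 - x^2) (so |z| = 1); otherwise z is the unique root with |z| > 1.\<close>
definition zpar :: "complex \<Rightarrow> complex" where
  "zpar x = (if Im x = 0 \<and> \<bar>Re x\<bar> \<le> 1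
             then Complex (Re x) (sqrt (1 - (Re x)\<^sup>2))
             else (THE z. cmod z > 1 \<and> (z + inverse z) / 2 = x))"

text \<open>With s = q^{1/2} (principal
  square root csqrt q) this is eta_q; with s = q^{-1/2} it is eta_q^{-1};
  s = q^{n/2} gives eta_{q^n}, s = q^{-n/2} gives eta_{q^{-n}}.\<close>
definition eta_s :: "complex \<Rightarrow> (complex \<Rightarrow> complex) \<Rightarrow> complex \<Rightarrow> complex" where
  "eta_s s f x = f ((s * zpar x + inverse s * inverse (zpar x)) / 2)"

definition eta_q :: "complex \<Rightarrow> (complex \<Rightarrow> complex) \<Rightarrow> complex \<Rightarrow> complex" where
  "eta_q q f = eta_s (csqrt q) f"

definition eta_q_inv :: "complex \<Rightarrow> (complex \<Rightarrow> complex) \<Rightarrow> complex \<Rightarrow> complex" where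
  "eta_q_inv q f = eta_s (inverse (csqrt q)) f"

definition eta_qpow :: "complex \<Rightarrow> nat \<Rightarrow> (complex \<Rightarrow> complex) \<Rightarrow> complex \<Rightarrow> complex" where
  "eta_qpow q n f = eta_s (csqrt q ^ n) f"

definition eta_qpow_neg :: "complex \<Rightarrow> nat \<Rightarrow> (complex \<Rightarrow> complex) \<Rightarrow> complex \<Rightarrow> complex" where
  "eta_qpow_neg q n f = eta_s (inverse (csqrt q) ^ n) f"

definition AW_quot :: "complex \<Rightarrow> (complex \<Rightarrow> complex) \<Rightarrow> complex \<Rightarrow> complex" where
  "AW_quot q f x = (eta_q q f x - eta_q_inv q f x) / (eta_q q id x - eta_q_inv q id x)"

definition AW :: "complex \<Rightarrow> (complex \<Rightarrow> complex) \<Rightarrow> complex \<Rightarrow> complex" where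
  "AW q f x = (if x = 1 \<or> x = -1 then Lim (at x) (AW_quot q f) else AW_quot q f x)"

definition AW_pow :: "complex \<Rightarrow> nat \<Rightarrow> (complex \<Rightarrow> complex) \<Rightarrow> complex \<Rightarrow> complex" where
  "AW_pow q n f = (AW q ^^ n) f"

definition Avg :: "complex \<Rightarrow> nat \<Rightarrow> (complex \<Rightarrow> complex) \<Rightarrow> complex \<Rightarrow> complex" where
  "Avg q n f = (if n = 0 then f else (\<lambda>x. (eta_qpow q n f x + eta_qpow_neg q n f x) / 2))"

end

theory Submission
  imports Defs
begin

lemma quad_roots:
  fixes x z w :: complex
  assumes "z * z - 2 * x * z + 1 = 0" "w * w = x * x - 1"
  shows "z = x + w \<or> z = x - w"
proof -
  have "(z - x) * (z - x) = (z * z - 2 * x * z + 1) + (x * x - 1)" by (simp add: algebra_simps)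
  also have "\<dots> = w * w" using assms by simp
  finally have "z - x = w \<or> z - x = - w" by (simp only: square_eq_iff)
  then show ?thesis by (auto simp: algebra_simps)
qed

lemma zpar_root: "zpar x \<noteq> 0 \<and> zpar x * zpar x - 2 * x * zpar x + 1 = 0"
proof (cases "Im x = 0 \<and> \<bar>Re x\<bar> \<le> 1")
  case True
  define a where "a = Re x"
  define b where "b = sqrt (1 - a\<^sup>2)"
  have a1: "a\<^sup>2 \<le> 1" using True unfolding a_def by (simp add: abs_square_le_1)
  have bb: "b * b = 1 - a\<^sup>2" unfolding b_def using a1 by (simp flip: power2_eq_square)
  have z: "zpar x = Complex a b" using True by (simp add: zpar_def a_def b_def)
  have x: "x = Complex a 0" using True by (simp add: a_def complex_eq_iff)
  have "Complex a b \<noteq> 0"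
  proof
    assume "Complex a b = 0" then have "a = 0" "b = 0" by (auto simp: complex_eq_iff)
    then show False using bb by simp
  qed
  moreover have "Complex a b * Complex a b - 2 * Complex a 0 * Complex a b + 1 = 0"
    using bb by (simp add: complex_eq_iff power2_eq_square algebra_simps)
  ultimately show ?thesis using z x by simp
next
  case False
  define r where "r = csqrt (x*x - 1)"
  have rr: "r * r = x * x - 1" unfolding r_def using power2_csqrt[of "x*x-1"] by (simp add: power2_eq_square)
  define w where "w = x + r"
  have wi: "w * (x - r) = 1" unfolding w_def using rr by (simp add: algebra_simps)
  have w0: "w \<noteq> 0" using wi by auto
  have iw: "inverse w = x - r" using wi by (rule inverse_unique)
  have hw0: "w + inverse w = 2 * x" by (subst iw) (simp add: w_def)
  have hw: "(w + inverse w) / 2 = x" using hw0 by simp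
  have hiw: "(inverse w + inverse (inverse w)) / 2 = x" using hw by (simp add: add.commute)
  have ex: "\<exists>z. cmod z > 1 \<and> (z + inverse z) / 2 = x"
  proof (cases "cmod w = 1")
    case True
    have "w * cnj w = 1" using True complex_norm_square[of w] by simp
    then have "inverse w = cnj w" by (rule inverse_unique)
    then have "x = (w + cnj w) / 2" using hw by simp
    then have "x = of_real (Re w)" by (simp add: complex_add_cnj)
    moreover have "\<bar>Re w\<bar> \<le> 1" using True abs_Re_le_cmod[of w] by simp
    ultimately show ?thesis using False by simp
  next
    case False
    show ?thesis
    proof (cases "cmod w > 1")
      case True then show ?thesis using hw by blast
    next
      case F2: False
      then have "cmod w < 1" using False by simp
      then have "cmod (inverse w) > 1" using w0 by (simp add: norm_inverse one_less_inverse)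
      then show ?thesis using hiw by blast
    qed
  qed
  have uq: "z1 = z2" if "cmod z1 > 1" "(z1 + inverse z1) / 2 = x" "cmod z2 > 1" "(z2 + inverse z2) / 2 = x" for z1 z2
  proof (rule ccontr)
    assume ne: "z1 \<noteq> z2"
    have n1: "z1 \<noteq> 0" "z2 \<noteq> 0" using that by auto
    have s1: "z1 + inverse z1 = 2 * x" "z2 + inverse z2 = 2 * x" using that by auto
    have "z1 * z1 - 2 * x * z1 + 1 = z1 * (z1 + inverse z1 - 2 * x)"
      using n1 by (simp add: algebra_simps)
    then have e1: "z1 * z1 - 2 * x * z1 + 1 = 0" using s1 by simp
    have "z2 * z2 - 2 * x * z2 + 1 = z2 * (z2 + inverse z2 - 2 * x)"
      using n1 by (simp add: algebra_simps)
    then have e2: "z2 * z2 - 2 * x * z2 + 1 = 0" using s1 by simp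
    have "(z1 - z2) * (z1 + z2 - 2 * x) = (z1 * z1 - 2 * x * z1 + 1) - (z2 * z2 - 2 * x * z2 + 1)"
      by (simp add: algebra_simps)
    then have "(z1 - z2) * (z1 + z2 - 2 * x) = 0" using e1 e2 by simp
    then have "z1 + z2 - 2 * x = 0" using ne by simp
    then have s: "z2 = 2 * x - z1" by (simp add: algebra_simps)
    have "z1 * z2 = 1 - (z1 * z1 - 2 * x * z1 + 1)" unfolding s by (simp add: algebra_simps)
    then have "z1 * z2 = 1" using e1 by simp
    moreover have "cmod (z1 * z2) > 1" using that by (simp add: norm_mult less_1_mult)
    ultimately show False by simp
  qed
  have EU: "\<exists>!z. cmod z > 1 \<and> (z + inverse z) / 2 = x" using ex uq by blast
  have zd: "zpar x = (THE z. cmod z > 1 \<and> (z + inverse z) / 2 = x)"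
    unfolding zpar_def by (rule if_not_P[OF False])
  from theI'[OF EU] have P: "cmod (zpar x) > 1 \<and> (zpar x + inverse (zpar x)) / 2 = x"
    unfolding zd .
  then have z0: "zpar x \<noteq> 0" by auto
  have "zpar x * zpar x - 2 * x * zpar x + 1 = zpar x * (zpar x + inverse (zpar x) - 2 * x)"
    using z0 by (simp add: algebra_simps)
  also have "\<dots> = 0" using P by simp
  finally show ?thesis using z0 by simp
qed

lemma zpar_nz: "zpar x \<noteq> 0" using zpar_root by blast

lemma zpar_sum: "zpar x + inverse (zpar x) = 2 * x"
proof -
  have z0: "zpar x \<noteq> 0" by (rule zpar_nz)
  have "zpar x * (zpar x + inverse (zpar x) - 2 * x) = zpar x * zpar x - 2 * x * zpar x + 1"
    using z0 by (simp add: algebra_simps)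
  also have "\<dots> = 0" using zpar_root by blast
  finally show ?thesis using z0 by simp
qed

lemma zpar_one: "zpar 1 = 1" by (simp add: zpar_def complex_eq_iff)
lemma zpar_mone: "zpar (-1) = -1" by (simp add: zpar_def complex_eq_iff)

lemma zpar_eq_c: "zpar x = c \<Longrightarrow> c \<in> {1, -1} \<Longrightarrow> x = c"
  using zpar_sum[of x] by auto

lemma zpar_sq: "(zpar x - x) * (zpar x - x) = x * x - 1"
proof -
  have "(zpar x - x) * (zpar x - x) = (zpar x * zpar x - 2 * x * zpar x + 1) + (x * x - 1)"
    by (simp add: algebra_simps)
  then show ?thesis using zpar_root by simp
qed

lemma zpar_local:
  assumes "x0 \<noteq> 1" "x0 \<noteq> -1"
  obtains \<psi> where "\<psi> analytic_on {x0}" "\<psi> x0 = zpar x0"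
    "\<And>x. \<psi> x \<noteq> 0" "\<And>x. zpar x = \<psi> x \<or> zpar x = inverse (\<psi> x)"
proof -
  define y0 where "y0 = zpar x0 - x0"
  have y0sq: "y0 * y0 = x0 * x0 - 1" unfolding y0_def by (rule zpar_sq)
  have d0: "x0 * x0 - 1 \<noteq> 0"
  proof
    assume "x0 * x0 - 1 = 0"
    then have "(x0 - 1) * (x0 + 1) = 0" by (simp add: algebra_simps)
    then have "x0 - 1 = 0 \<or> x0 + 1 = 0" by simp
    moreover have "x0 + 1 = 0 \<Longrightarrow> x0 = -1" by (simp add: eq_neg_iff_add_eq_0)
    ultimately show False using assms by auto
  qed
  define r where "r = (\<lambda>x. y0 * csqrt ((x * x - 1) / (x0 * x0 - 1)))"
  have rr: "r x * r x = x * x - 1" for x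
  proof -
    have "r x * r x = (y0 * y0) * (csqrt ((x * x - 1) / (x0 * x0 - 1)))\<^sup>2"
      unfolding r_def by (simp add: power2_eq_square algebra_simps)
    also have "\<dots> = x * x - 1" using d0 by (simp add: y0sq)
    finally show ?thesis .
  qed
  define \<psi> where "\<psi> = (\<lambda>x. x + r x)"
  have pr: "\<psi> x * (x - r x) = 1" for x unfolding \<psi>_def using rr[of x] by (simp add: algebra_simps)
  show ?thesis
  proof
    show "\<psi> analytic_on {x0}" unfolding \<psi>_def r_def
      using d0 by (intro analytic_intros) (auto simp: complex_nonpos_Reals_iff)
    show "\<psi> x0 = zpar x0" unfolding \<psi>_def r_def y0_def using d0 by simp
    show "\<psi> x \<noteq> 0" for x using pr[of x] by auto
    show "zpar x = \<psi> x \<or> zpar x = inverse (\<psi> x)" for x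
    proof -
      have i: "inverse (\<psi> x) = x - r x" using pr[of x] by (rule inverse_unique)
      have "zpar x = x + r x \<or> zpar x = x - r x"
        using quad_roots[OF conjunct2[OF zpar_root] rr] .
      then show ?thesis by (subst i) (simp add: \<psi>_def)
    qed
  qed
qed

lemma zpar_tendsto:
  assumes c: "c \<in> {1, -1}"
  shows "(zpar \<longlongrightarrow> c) (at c)"
proof -
  have bound: "cmod (zpar x - c) \<le> cmod (x - c) + sqrt (cmod (x * x - 1))" for x
  proof -
    have "cmod (zpar x - x) ^ 2 = cmod (x * x - 1)"
      by (metis norm_mult power2_eq_square zpar_sq)
    then have e: "cmod (zpar x - x) = sqrt (cmod (x * x - 1))"
      by (metis norm_ge_zero real_sqrt_unique)
    have "cmod (zpar x - c) \<le> cmod (x - c) + cmod (zpar x - x)"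
      using norm_triangle_ineq[of "x - c" "zpar x - x"] by simp
    then show ?thesis using e by simp
  qed
  have "((\<lambda>x. cmod (x - c) + sqrt (cmod (x * x - 1))) \<longlongrightarrow>
          cmod (c - c) + sqrt (cmod (c * c - 1))) (at c)"
    by (intro tendsto_intros)
  moreover have "cmod (c - c) + sqrt (cmod (c * c - 1)) = 0" using c by auto
  ultimately have "((\<lambda>x. cmod (x - c) + sqrt (cmod (x * x - 1))) \<longlongrightarrow> 0) (at c)" by simp
  then have "((\<lambda>x. zpar x - c) \<longlongrightarrow> 0) (at c)"
    by (rule Lim_null_comparison[rotated]) (use bound in auto)
  then show ?thesis by (simp add: LIM_zero_iff)
qed

lemma zpar_filterlim:
  assumes c: "c \<in> {1, -1}"
  shows "filterlim zpar (at c) (at c)"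
proof (rule filterlim_atI)
  show "(zpar \<longlongrightarrow> c) (at c)" using c by (rule zpar_tendsto)
  show "\<forall>\<^sub>F x in at c. zpar x \<noteq> c"
    using eventually_neq_at_within[of c c UNIV]
    by (rule eventually_mono) (use zpar_eq_c[OF _ c] in blast)
qed

lemma zpar_local_G:
  assumes "x0 \<noteq> 1" "x0 \<noteq> -1" and inv: "\<And>z. z \<noteq> 0 \<Longrightarrow> G (inverse z) = G z"
  obtains \<psi> where "\<psi> analytic_on {x0}" "\<psi> x0 = zpar x0"
    "\<And>x. \<psi> x \<noteq> 0" "(\<lambda>x. G (zpar x)) = (\<lambda>x. G (\<psi> x))"
proof -
  obtain \<psi> where \<psi>: "\<psi> analytic_on {x0}" "\<psi> x0 = zpar x0"
    "\<And>x. \<psi> x \<noteq> 0" "\<And>x. zpar x = \<psi> x \<or> zpar x = inverse (\<psi> x)"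
    using zpar_local[OF assms(1,2)] by blast
  have "(\<lambda>x. G (zpar x)) = (\<lambda>x. G (\<psi> x))"
  proof
    fix x show "G (zpar x) = G (\<psi> x)" using \<psi>(4)[of x] inv[OF \<psi>(3)[of x]] by auto
  qed
  then show ?thesis using \<psi> that by blast
qed

lemma open_Compl0: "open (-{0::complex})" by (simp add: open_Compl)

lemma descent_hol:
  assumes G: "G holomorphic_on -{0}" and inv: "\<And>z. z \<noteq> 0 \<Longrightarrow> G (inverse z) = G z"
  shows "(\<lambda>x. G (zpar x)) holomorphic_on UNIV"
proof -
  have GA: "G analytic_on -{0}" using G by (simp add: analytic_on_open open_Compl0)
  have an: "(\<lambda>x. G (zpar x)) analytic_on {x0}" if h: "x0 \<noteq> 1" "x0 \<noteq> -1" for x0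
  proof -
    obtain \<psi> where \<psi>: "\<psi> analytic_on {x0}" "\<psi> x0 = zpar x0"
      "\<And>x. \<psi> x \<noteq> 0" "(\<lambda>x. G (zpar x)) = (\<lambda>x. G (\<psi> x))"
      using zpar_local_G[of x0 G, OF h(1,2) inv that] .
    have "(G \<circ> \<psi>) analytic_on {x0}"
      by (rule analytic_on_compose_gen[OF \<psi>(1) GA]) (use \<psi>(3) in auto)
    then show ?thesis by (simp add: \<psi>(4) o_def)
  qed
  then have "(\<lambda>x. G (zpar x)) analytic_on (UNIV - {1,-1})"
    by (subst analytic_on_analytic_at) auto
  then have H: "(\<lambda>x. G (zpar x)) holomorphic_on (UNIV - {1,-1})"
    by (rule analytic_imp_holomorphic)
  show ?thesis
  proof (rule no_isolated_singularity'[OF _ H])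
    fix c :: complex assume c: "c \<in> {1, -1}"
    have "continuous_on (-{0}) G" using G by (rule holomorphic_on_imp_continuous_on)
    then have "isCont G c" using c open_Compl0 continuous_on_eq_continuous_at by fastforce
    then have "((\<lambda>x. G (zpar x)) \<longlongrightarrow> G c) (at c)"
      using isCont_tendsto_compose[OF _ zpar_tendsto[OF c]] by blast
    then show "((\<lambda>x. G (zpar x)) \<longlongrightarrow> G (zpar c)) (at c within UNIV)"
      using c zpar_one zpar_mone by auto
  qed auto
qed

lemma descent_mer:
  assumes G: "G meromorphic_on -{0}" and inv: "\<And>z. z \<noteq> 0 \<Longrightarrow> G (inverse z) = G z"
  shows "(\<lambda>x. G (zpar x)) meromorphic_on UNIV"
proof -
  have m1: "(\<lambda>x. G (zpar x)) meromorphic_on {x0}" if h: "x0 \<noteq> 1" "x0 \<noteq> -1" for x0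
  proof -
    obtain \<psi> where \<psi>: "\<psi> analytic_on {x0}" "\<psi> x0 = zpar x0"
      "\<And>x. \<psi> x \<noteq> 0" "(\<lambda>x. G (zpar x)) = (\<lambda>x. G (\<psi> x))"
      using zpar_local_G[of x0 G, OF h(1,2) inv that] .
    have "(\<lambda>x. G (\<psi> x)) meromorphic_on {x0}"
      by (rule meromorphic_on_compose[OF G \<psi>(1)]) (use \<psi>(3) in auto)
    then show ?thesis by (simp add: \<psi>(4))
  qed
  have a1: "(\<lambda>x. G (zpar x)) analytic_on {x0}" if h: "x0 \<noteq> 1" "x0 \<noteq> -1" "G analytic_on {zpar x0}" for x0
  proof -
    obtain \<psi> where \<psi>: "\<psi> analytic_on {x0}" "\<psi> x0 = zpar x0"
      "\<And>x. \<psi> x \<noteq> 0" "(\<lambda>x. G (zpar x)) = (\<lambda>x. G (\<psi> x))"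
      using zpar_local_G[of x0 G, OF h(1,2) inv that] .
    have "(G \<circ> \<psi>) analytic_on {x0}"
      by (rule analytic_on_compose_gen[OF \<psi>(1) h(3)]) (use \<psi>(2) in auto)
    then show ?thesis by (simp add: \<psi>(4) o_def)
  qed
  have m2: "(\<lambda>x. G (zpar x)) meromorphic_on {c}" if c: "c \<in> {1, -1}" for c :: complex
  proof -
    have c0: "c \<in> -{0}" using c by auto
    have Gc: "G meromorphic_on {c}" by (rule meromorphic_on_subset[OF G]) (use c0 in simp)
    then have iso: "isolated_singularity_at G c" and ne: "not_essential G c"
      by (simp_all add: meromorphic_at_iff)
    from iso obtain \<rho> where \<rho>: "\<rho> > 0" "G analytic_on ball c \<rho> - {c}"
      unfolding isolated_singularity_at_def by blast
    have "\<forall>\<^sub>F x in at c. dist (zpar x) c < \<rho>"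
      using tendstoD[OF zpar_tendsto[OF c] \<rho>(1)] .
    then obtain d where d: "d > 0" "\<And>x. x \<noteq> c \<Longrightarrow> dist x c < d \<Longrightarrow> dist (zpar x) c < \<rho>"
      unfolding eventually_at by (metis UNIV_I)
    define r where "r = min d 1"
    have iso': "isolated_singularity_at (\<lambda>x. G (zpar x)) c"
      unfolding isolated_singularity_at_def
    proof (intro exI conjI)
      show "r > 0" using d by (simp add: r_def)
      show "(\<lambda>x. G (zpar x)) analytic_on ball c r - {c}"
      proof (subst analytic_on_analytic_at, intro ballI)
        fix x assume x: "x \<in> ball c r - {c}"
        then have xc: "x \<noteq> c" "dist x c < d" "dist x c < 1"
          by (auto simp: r_def dist_commute)
        have "x \<noteq> - c"
        proof
          assume xm: "x = - c"
          have "dist x c = 2" using c unfolding xm by (auto simp: dist_norm)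
          then show False using xc by simp
        qed
        then have x1: "x \<noteq> 1" "x \<noteq> -1" using xc c by auto
        have "zpar x \<in> ball c \<rho> - {c}"
          using d(2)[OF xc(1,2)] zpar_eq_c[OF _ c] xc(1) by (auto simp: dist_commute)
        then have "G analytic_on {zpar x}" by (intro analytic_on_subset[OF \<rho>(2)]) simp
        then show "(\<lambda>x. G (zpar x)) analytic_on {x}" by (rule a1[OF x1])
      qed
    qed
    have ne': "not_essential (\<lambda>x. G (zpar x)) c"
    proof -
      from ne consider (a) l where "(G \<longlongrightarrow> l) (at c)" | (b) "is_pole G c"
        unfolding not_essential_def by blast
      then show ?thesis
      proof cases
        case a
        have "((\<lambda>x. G (zpar x)) \<longlongrightarrow> l) (at c)"
          by (rule filterlim_compose[OF a zpar_filterlim[OF c]])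
        then show ?thesis unfolding not_essential_def by blast
      next
        case b
        have "filterlim (\<lambda>x. G (zpar x)) at_infinity (at c)"
          by (rule filterlim_compose[OF b[unfolded is_pole_def] zpar_filterlim[OF c]])
        then show ?thesis unfolding not_essential_def is_pole_def by blast
      qed
    qed
    show ?thesis using iso' ne' by (simp add: meromorphic_at_iff)
  qed
  show ?thesis
  proof (subst meromorphic_on_meromorphic_at, intro ballI)
    fix x :: complex assume "x \<in> UNIV"
    show "(\<lambda>x. G (zpar x)) meromorphic_on {x}"
    proof (cases "x = 1 \<or> x = -1")
      case True then have "x \<in> {1, -1}" by simp
      then show ?thesis by (rule m2)
    next
      case False then have "x \<noteq> 1" "x \<noteq> -1" by auto
      then show ?thesis by (rule m1)
    qed
  qed
qed

definition phi :: "complex \<Rightarrow> complex" where "phi w = (w + inverse w) / 2"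

lemma phi_inv: "phi (inverse w) = phi w" by (simp add: phi_def add.commute)

lemma eta_s_phi: "eta_s t f x = f (phi (t * zpar x))"
  by (simp add: eta_s_def phi_def inverse_mult_distrib)

lemma sym_pair:
  assumes "t \<noteq> 0"
  shows "phi (t * inverse z) = phi (inverse t * z)" "phi (inverse t * inverse z) = phi (t * z)"
proof -
  have "t * inverse z = inverse (inverse t * z)" by (simp add: inverse_mult_distrib)
  then have "phi (t * inverse z) = phi (inverse (inverse t * z))" by (rule arg_cong)
  also have "\<dots> = phi (inverse t * z)" by (rule phi_inv)
  finally show "phi (t * inverse z) = phi (inverse t * z)" .
  have "inverse t * inverse z = inverse (t * z)" by (simp add: inverse_mult_distrib)
  then have "phi (inverse t * inverse z) = phi (inverse (t * z))" by (rule arg_cong)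
  also have "\<dots> = phi (t * z)" by (rule phi_inv)
  finally show "phi (inverse t * inverse z) = phi (t * z)" .
qed

lemma phi_an: "a \<noteq> 0 \<Longrightarrow> (\<lambda>z. phi (a * z)) analytic_on -{0}"
  unfolding phi_def by (intro analytic_intros) auto

lemma comp_hol:
  assumes f: "f holomorphic_on UNIV" and a: "a \<noteq> 0"
  shows "(\<lambda>z. f (phi (a * z))) holomorphic_on -{0}"
proof -
  have "(\<lambda>z. phi (a * z)) holomorphic_on -{0}"
    using phi_an[OF a] by (rule analytic_imp_holomorphic)
  from holomorphic_on_compose_gen[OF this f] show ?thesis by (simp add: o_def)
qed

lemma comp_mer:
  assumes f: "f meromorphic_on UNIV" and a: "a \<noteq> 0"
  shows "(\<lambda>z. f (phi (a * z))) meromorphic_on -{0}"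
  by (rule meromorphic_on_compose[OF f phi_an[OF a]]) auto

lemma avg_eq:
  fixes q :: complex
  assumes "n \<noteq> 0"
  shows "Avg q n f = (\<lambda>x. (\<lambda>z. (f (phi (csqrt q ^ n * z)) + f (phi (inverse (csqrt q ^ n) * z))) / 2) (zpar x))"
  using assms by (simp add: Avg_def eta_qpow_def eta_qpow_neg_def eta_s_phi power_inverse fun_eq_iff)

lemma prod_eq:
  fixes q :: complex
  shows "(\<lambda>x. eta_qpow q n f x * eta_qpow_neg q n f x) =
    (\<lambda>x. (\<lambda>z. f (phi (csqrt q ^ n * z)) * f (phi (inverse (csqrt q ^ n) * z))) (zpar x))"
  by (simp add: eta_qpow_def eta_qpow_neg_def eta_s_phi power_inverse fun_eq_iff)

lemma quot_eq:
  fixes q :: complex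
  shows "AW_quot q f x = (f (phi (csqrt q * zpar x)) - f (phi (inverse (csqrt q) * zpar x)))
                         / (phi (csqrt q * zpar x) - phi (inverse (csqrt q) * zpar x))"
  by (simp add: AW_quot_def eta_q_def eta_q_inv_def eta_s_phi)

lemma s_facts:
  fixes q :: complex assumes "q \<noteq> 0" "q \<noteq> 1"
  shows "csqrt q \<noteq> 0" "csqrt q - inverse (csqrt q) \<noteq> 0"
proof -
  have sq: "csqrt q * csqrt q = q" using power2_csqrt[of q] by (simp add: power2_eq_square)
  show s0: "csqrt q \<noteq> 0" using sq assms by auto
  show "csqrt q - inverse (csqrt q) \<noteq> 0"
  proof
    assume "csqrt q - inverse (csqrt q) = 0"
    then have e: "csqrt q = inverse (csqrt q)" by simp
    have "csqrt q * csqrt q = csqrt q * inverse (csqrt q)"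
      using arg_cong[OF e, of "\<lambda>w. csqrt q * w"] by simp
    also have "\<dots> = 1" using s0 by simp
    finally have "csqrt q * csqrt q = 1" .
    then show False using sq assms by simp
  qed
qed

lemma avg_prod_hol:
  fixes q :: complex assumes q: "q \<noteq> 0" "q \<noteq> 1" and f: "f holomorphic_on UNIV"
  shows "Avg q n f holomorphic_on UNIV"
    "(\<lambda>x. eta_qpow q n f x * eta_qpow_neg q n f x) holomorphic_on UNIV"
proof -
  define t where "t = csqrt q ^ n"
  have t0: "t \<noteq> 0" using s_facts[OF q] by (simp add: t_def)
  have it0: "inverse t \<noteq> 0" using t0 by simp
  show "Avg q n f holomorphic_on UNIV"
  proof (cases "n = 0")
    case True then show ?thesis using f by (simp add: Avg_def)
  next
    case False
    show ?thesis unfolding avg_eq[OF False, of q f, folded t_def]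
      by (rule descent_hol[where G = "\<lambda>z. (f (phi (t * z)) + f (phi (inverse t * z))) / 2"], (intro holomorphic_intros comp_hol[OF f t0] comp_hol[OF f it0]; simp),
          simp only: sym_pair[OF t0], simp add: ac_simps)
  qed
  show "(\<lambda>x. eta_qpow q n f x * eta_qpow_neg q n f x) holomorphic_on UNIV"
    unfolding prod_eq[of q n f, folded t_def]
    by (rule descent_hol, (intro holomorphic_intros comp_hol[OF f t0] comp_hol[OF f it0]; simp),
          simp only: sym_pair[OF t0], simp add: ac_simps)
qed

lemma avg_prod_mer:
  fixes q :: complex assumes q: "q \<noteq> 0" "q \<noteq> 1" and f: "f meromorphic_on UNIV"
  shows "Avg q n f meromorphic_on UNIV"
    "(\<lambda>x. eta_qpow q n f x * eta_qpow_neg q n f x) meromorphic_on UNIV"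
proof -
  define t where "t = csqrt q ^ n"
  have t0: "t \<noteq> 0" using s_facts[OF q] by (simp add: t_def)
  have it0: "inverse t \<noteq> 0" using t0 by simp
  show "Avg q n f meromorphic_on UNIV"
  proof (cases "n = 0")
    case True then show ?thesis using f by (simp add: Avg_def)
  next
    case False
    show ?thesis unfolding avg_eq[OF False, of q f, folded t_def]
      by (rule descent_mer[where G = "\<lambda>z. (f (phi (t * z)) + f (phi (inverse t * z))) / 2"], (intro meromorphic_intros comp_mer[OF f t0] comp_mer[OF f it0]; simp),
          simp only: sym_pair[OF t0], simp add: ac_simps)
  qed
  show "(\<lambda>x. eta_qpow q n f x * eta_qpow_neg q n f x) meromorphic_on UNIV"
    unfolding prod_eq[of q n f, folded t_def]
    by (rule descent_mer, (intro meromorphic_intros comp_mer[OF f t0] comp_mer[OF f it0]; simp),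
          simp only: sym_pair[OF t0], simp add: ac_simps)
qed

lemma N_inv:
  fixes f :: "complex \<Rightarrow> complex"
  assumes s0: "s \<noteq> 0"
  shows "f (phi (s * inverse z)) - f (phi (inverse s * inverse z)) = - (f (phi (s * z)) - f (phi (inverse s * z)))"
    "phi (s * inverse z) - phi (inverse s * inverse z) = - (phi (s * z) - phi (inverse s * z))"
  by (simp_all only: sym_pair[OF s0]) (simp_all add: algebra_simps)

lemma ev_neq_pm: "\<forall>\<^sub>F w in at z. w \<noteq> (1::complex) \<and> w \<noteq> -1"
  using eventually_neq_at_within[of 1 z UNIV] eventually_neq_at_within[of "-1" z UNIV]
  by (rule eventually_conj)

lemma AW_mer:
  fixes q :: complex assumes q: "q \<noteq> 0" "q \<noteq> 1" and f: "f meromorphic_on UNIV"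
  shows "AW q f meromorphic_on UNIV"
proof -
  define s where "s = csqrt q"
  have s0: "s \<noteq> 0" using s_facts[OF q] by (simp add: s_def)
  have is0: "inverse s \<noteq> 0" using s0 by simp
  define G where "G = (\<lambda>z. (f (phi (s * z)) - f (phi (inverse s * z))) / (phi (s * z) - phi (inverse s * z)))"
  have GM: "G meromorphic_on -{0}" unfolding G_def
    by (intro meromorphic_intros comp_mer[OF f s0] comp_mer[OF f is0] analytic_on_imp_meromorphic_on
        analytic_intros phi_an[OF s0] phi_an[OF is0])
  have Gi: "G (inverse z) = G z" if "z \<noteq> 0" for z
    unfolding G_def by (simp only: N_inv[OF s0] minus_divide_divide)
  have D: "(\<lambda>x. G (zpar x)) meromorphic_on UNIV" by (rule descent_mer[OF GM Gi])
  show ?thesis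
  proof (subst meromorphic_on_cong[OF _ refl])
    show "\<forall>\<^sub>F w in at z. AW q f w = G (zpar w)" if "z \<in> UNIV" for z
      using ev_neq_pm[of z] by (rule eventually_mono) (simp add: AW_def quot_eq G_def s_def)
  qed (rule D)
qed

lemma AW_hol:
  fixes q :: complex assumes q: "q \<noteq> 0" "q \<noteq> 1" and f: "f holomorphic_on UNIV"
  shows "AW q f holomorphic_on UNIV"
proof -
  define s where "s = csqrt q"
  have s0: "s \<noteq> 0" using s_facts[OF q] by (simp add: s_def)
  have is0: "inverse s \<noteq> 0" using s0 by simp
  have k0: "s - inverse s \<noteq> 0" using s_facts[OF q] by (simp add: s_def)
  define N where "N = (\<lambda>z. f (phi (s * z)) - f (phi (inverse s * z)))"
  define D where "D = (\<lambda>z. phi (s * z) - phi (inverse s * z))"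
  have NH: "N holomorphic_on -{0}" unfolding N_def
    by (intro holomorphic_intros comp_hol[OF f s0] comp_hol[OF f is0])
  have Ni: "N (inverse z) = - N z" for z unfolding N_def by (rule N_inv[OF s0])
  have Di: "D (inverse z) = - D z" for z unfolding D_def by (rule N_inv[OF s0])
  have N1: "N 1 = 0" using Ni[of 1] by simp
  have Nm1: "N (-1) = 0" using Ni[of "-1"] by simp
  have Dz: "D z = (s - inverse s) * (z * z - 1) / (2 * z)" if "z \<noteq> 0" for z
    unfolding D_def phi_def using that s0 by (simp add: field_simps)
  have int: "c \<in> interior (-{0::complex})" if "c \<noteq> 0" for c
    using that by (simp add: interior_open open_Compl0)
  define P1 where "P1 = (\<lambda>z. if z = 1 then deriv N 1 else (N z - N 1) / (z - 1))"
  have P1H: "P1 holomorphic_on -{0}" unfolding P1_def by (rule pole_lemma[OF NH int]) simp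
  define P2 where "P2 = (\<lambda>z. if z = -1 then deriv P1 (-1) else (P1 z - P1 (-1)) / (z - (-1)))"
  have P2H: "P2 holomorphic_on -{0}" unfolding P2_def by (rule pole_lemma[OF P1H int]) simp
  have P1m1: "P1 (-1) = 0" unfolding P1_def using N1 Nm1 by simp
  have P2z: "P2 z = N z / ((z - 1) * (z + 1))" if "z \<noteq> 1" "z \<noteq> -1" for z
    using that unfolding P2_def P1m1 by (simp add: P1_def N1 divide_divide_eq_left)
  define Gh where "Gh = (\<lambda>z. 2 * z * P2 z / (s - inverse s))"
  have GhH: "Gh holomorphic_on -{0}" unfolding Gh_def using k0
    by (intro holomorphic_intros P2H) auto
  have GhND: "Gh z = N z / D z" if "z \<noteq> 0" "z \<noteq> 1" "z \<noteq> -1" for z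
  proof -
    have a: "z - 1 \<noteq> 0" "z + 1 \<noteq> 0" using that by (auto simp: add_eq_0_iff2)
    have b: "z * z - 1 = (z - 1) * (z + 1)" by (simp add: algebra_simps)
    show ?thesis unfolding Gh_def P2z[OF that(2,3)] Dz[OF that(1)] b
      using a k0 that(1) by (simp add: field_simps)
  qed
  have Ghi: "Gh (inverse z) = Gh z" if "z \<noteq> 0" for z
  proof (cases "z = 1 \<or> z = -1")
    case True then show ?thesis by auto
  next
    case False
    have m: "inverse z \<noteq> -1"
    proof
      assume "inverse z = -1"
      then have "z = inverse (-1)" by (metis inverse_inverse_eq)
      then show False using False by simp
    qed
    have im: "inverse z \<noteq> 0" "inverse z \<noteq> 1" "inverse z \<noteq> -1" using that False m
      by (auto simp: inverse_eq_iff_eq)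
    show ?thesis using GhND[OF im] GhND[OF that] False Ni Di by simp
  qed
  define H where "H = (\<lambda>x. Gh (zpar x))"
  have HH: "H holomorphic_on UNIV" unfolding H_def by (rule descent_hol[OF GhH Ghi])
  have qH: "AW_quot q f x = H x" if "x \<noteq> 1" "x \<noteq> -1" for x
  proof -
    have "zpar x \<noteq> 0" "zpar x \<noteq> 1" "zpar x \<noteq> -1"
      using zpar_nz that zpar_eq_c[of x 1] zpar_eq_c[of x "-1"] by auto
    then show ?thesis unfolding H_def GhND[OF \<open>zpar x \<noteq> 0\<close> \<open>zpar x \<noteq> 1\<close> \<open>zpar x \<noteq> -1\<close>]
      by (simp add: quot_eq N_def D_def s_def)
  qed
  have "AW q f = H"
  proof
    fix x show "AW q f x = H x"
    proof (cases "x = 1 \<or> x = -1")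
      case False then show ?thesis using qH by (simp add: AW_def)
    next
      case True
      have "isCont H x" using holomorphic_on_imp_continuous_on[OF HH] continuous_on_eq_continuous_at[OF open_UNIV, of H] by simp
      then have "(H \<longlongrightarrow> H x) (at x)" by (rule isContD)
      moreover have "\<forall>\<^sub>F w in at x. H w = AW_quot q f w"
        using ev_neq_pm[of x] by (rule eventually_mono) (simp add: qH)
      ultimately have "(AW_quot q f \<longlongrightarrow> H x) (at x)" by (rule Lim_transform_eventually)
      then have "Lim (at x) (AW_quot q f) = H x" by (rule tendsto_Lim[rotated]) simp
      then show ?thesis using True by (auto simp: AW_def)
    qed
  qed
  then show ?thesis using HH by simp
qed

theorem proposition2p3:
  fixes q :: complex and n :: nat and f :: "complex \<Rightarrow> complex"
  assumes "0 < cmod q" and "cmod q < 1"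
  shows "(f holomorphic_on UNIV \<longrightarrow>
            AW_pow q n f holomorphic_on UNIV \<and>
            Avg q n f holomorphic_on UNIV \<and>
            (\<lambda>x. eta_qpow q n f x * eta_qpow_neg q n f x) holomorphic_on UNIV) \<and>
         (f meromorphic_on UNIV \<longrightarrow>
            AW_pow q n f meromorphic_on UNIV \<and>
            Avg q n f meromorphic_on UNIV \<and>
            (\<lambda>x. eta_qpow q n f x * eta_qpow_neg q n f x) meromorphic_on UNIV)"
proof -
  have q: "q \<noteq> 0" "q \<noteq> 1" using assms by auto
  have pH: "AW_pow q m f holomorphic_on UNIV" if "f holomorphic_on UNIV" for m
  proof (induction m)
    case 0 then show ?case using that by (simp add: AW_pow_def)
  next
    case (Suc m)
    then have "AW q (AW_pow q m f) holomorphic_on UNIV" by (rule AW_hol[OF q])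
    then show ?case by (simp add: AW_pow_def)
  qed
  have pM: "AW_pow q m f meromorphic_on UNIV" if "f meromorphic_on UNIV" for m
  proof (induction m)
    case 0 then show ?case using that by (simp add: AW_pow_def)
  next
    case (Suc m)
    then have "AW q (AW_pow q m f) meromorphic_on UNIV" by (rule AW_mer[OF q])
    then show ?case by (simp add: AW_pow_def)
  qed
  show ?thesis using pH pM avg_prod_hol[OF q] avg_prod_mer[OF q] by blast
qed

end
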